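(* For every graph $G$ and every tree $F$, $\chi_c^{\bullet}(G\,\square\, F)\leq \chi_c^{\bullet}(G)+1$, where $\square$ denotes the Cartesian product of graphs.
   Context: All graphs are finite and simple. A correspondence-cover of a graph $G$ is a pair $(L,H)$ where $H$ is a graph and $L$ maps each $v\in V(G)$ to a subset $L(v)\subseteq V(H)$ such that: the sets $L(v)$ partition $V(H)$; each $L(v)$ induces a clique in $H$; if $uv\notin E(G)$ there are no edges of $H$ between $L(u)$ and $L(v)$; if $uv\in E(G)$ the edges of $H$ between $L(u)$ and $L(v)$ form a matching. The cover is $k$-fold if $|L(v)|=k$ for all $v$. An independent transversal is an independent set of $H$ containing exactly one vertex of each $L(v)$. A cover has a fractional packing if there is a probability distribution on independent transversals $I$ with $\Pr(x\in I)=1/|L(v)|$ for all $v$ and $x\in L(v)$. $\chi_c^{\bullet}(G)$ is the least $k\ge1$ such that every $k$-fold correspondence-cover of $G$ has a fractional packing. *)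

theory Defs
  imports "HOL-Probability.Probability"
begin

definition graph :: "'a set \<Rightarrow> ('a \<Rightarrow> 'a \<Rightarrow> bool) \<Rightarrow> bool" where
  "graph V E \<longleftrightarrow> finite V \<and> (\<forall>u v. E u v \<longrightarrow> u \<in> V \<and> v \<in> V)
      \<and> (\<forall>u v. E u v \<longrightarrow> E v u) \<and> (\<forall>v. \<not> E v v)"

definition connected_graph :: "'a set \<Rightarrow> ('a \<Rightarrow> 'a \<Rightarrow> bool) \<Rightarrow> bool" where
  "connected_graph V E \<longleftrightarrow> (\<forall>u\<in>V. \<forall>v\<in>V. E\<^sup>*\<^sup>* u v)"

definition is_cycle :: "'a set \<Rightarrow> ('a \<Rightarrow> 'a \<Rightarrow> bool) \<Rightarrow> 'a list \<Rightarrow> bool" where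
  "is_cycle V E cs \<longleftrightarrow> length cs \<ge> 3 \<and> distinct cs \<and> set cs \<subseteq> V
      \<and> (\<forall>i. Suc i < length cs \<longrightarrow> E (cs ! i) (cs ! Suc i))
      \<and> E (last cs) (hd cs)"

definition tree :: "'a set \<Rightarrow> ('a \<Rightarrow> 'a \<Rightarrow> bool) \<Rightarrow> bool" where
  "tree V E \<longleftrightarrow> graph V E \<and> V \<noteq> {} \<and> connected_graph V E \<and> (\<nexists>cs. is_cycle V E cs)"

definition cart_prod_edges ::
  "('a \<Rightarrow> 'a \<Rightarrow> bool) \<Rightarrow> ('c \<Rightarrow> 'c \<Rightarrow> bool) \<Rightarrow> ('a \<times> 'c) \<Rightarrow> ('a \<times> 'c) \<Rightarrow> bool" where
  "cart_prod_edges E F p q \<longleftrightarrow>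
     (fst p = fst q \<and> F (snd p) (snd q)) \<or> (snd p = snd q \<and> E (fst p) (fst q))"

definition corr_cover ::
  "'a set \<Rightarrow> ('a \<Rightarrow> 'a \<Rightarrow> bool) \<Rightarrow> ('a \<Rightarrow> 'b set) \<Rightarrow> 'b set \<Rightarrow> ('b \<Rightarrow> 'b \<Rightarrow> bool) \<Rightarrow> bool" where
  "corr_cover V E L VH EH \<longleftrightarrow>
     graph VH EH
     \<and> (\<forall>v\<in>V. L v \<noteq> {})
     \<and> VH = (\<Union>v\<in>V. L v)
     \<and> (\<forall>u\<in>V. \<forall>v\<in>V. u \<noteq> v \<longrightarrow> L u \<inter> L v = {})
     \<and> (\<forall>v\<in>V. \<forall>x\<in>L v. \<forall>y\<in>L v. x \<noteq> y \<longrightarrow> EH x y)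
     \<and> (\<forall>u\<in>V. \<forall>v\<in>V. u \<noteq> v \<and> \<not> E u v \<longrightarrow> (\<forall>x\<in>L u. \<forall>y\<in>L v. \<not> EH x y))
     \<and> (\<forall>u\<in>V. \<forall>v\<in>V. E u v \<longrightarrow>
          (\<forall>x\<in>L u. \<forall>y1\<in>L v. \<forall>y2\<in>L v. EH x y1 \<and> EH x y2 \<longrightarrow> y1 = y2)
        \<and> (\<forall>y\<in>L v. \<forall>x1\<in>L u. \<forall>x2\<in>L u. EH x1 y \<and> EH x2 y \<longrightarrow> x1 = x2))"

definition k_fold_cover ::
  "nat \<Rightarrow> 'a set \<Rightarrow> ('a \<Rightarrow> 'a \<Rightarrow> bool) \<Rightarrow> ('a \<Rightarrow> 'b set) \<Rightarrow> 'b set \<Rightarrow> ('b \<Rightarrow> 'b \<Rightarrow> bool) \<Rightarrow> bool" where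
  "k_fold_cover k V E L VH EH \<longleftrightarrow> corr_cover V E L VH EH \<and> (\<forall>v\<in>V. card (L v) = k)"

definition indep_transversal ::
  "'a set \<Rightarrow> ('a \<Rightarrow> 'b set) \<Rightarrow> 'b set \<Rightarrow> ('b \<Rightarrow> 'b \<Rightarrow> bool) \<Rightarrow> 'b set \<Rightarrow> bool" where
  "indep_transversal V L VH EH I \<longleftrightarrow>
     I \<subseteq> VH \<and> (\<forall>x\<in>I. \<forall>y\<in>I. \<not> EH x y) \<and> (\<forall>v\<in>V. card (I \<inter> L v) = 1)"

definition has_fractional_packing ::
  "'a set \<Rightarrow> ('a \<Rightarrow> 'b set) \<Rightarrow> 'b set \<Rightarrow> ('b \<Rightarrow> 'b \<Rightarrow> bool) \<Rightarrow> bool" where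
  "has_fractional_packing V L VH EH \<longleftrightarrow>
     (\<exists>p :: 'b set pmf. set_pmf p \<subseteq> {I. indep_transversal V L VH EH I}
        \<and> (\<forall>v\<in>V. \<forall>x\<in>L v. measure_pmf.prob p {I. x \<in> I} = 1 / real (card (L v))))"

text \<open>The fractional correspondence packing number. Covers are taken with vertices of
  type 'a \<times> nat; every finite cover is isomorphic to one of this type.\<close>
definition chi_c_bullet :: "'a set \<Rightarrow> ('a \<Rightarrow> 'a \<Rightarrow> bool) \<Rightarrow> nat" where
  "chi_c_bullet V E = (LEAST k. k \<ge> 1 \<and>
     (\<forall>(L :: 'a \<Rightarrow> ('a \<times> nat) set) VH EH. k_fold_cover k V E L VH EH
        \<longrightarrow> has_fractional_packing V L VH EH))"

end

theory Submission
  imports Defs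
begin

lemma measure_bind_pmf_real:
  "measure_pmf.prob (bind_pmf M N) X = (\<integral>x. measure_pmf.prob (N x) X \<partial>measure_pmf M)"
proof -
  have int: "integrable (measure_pmf M) (\<lambda>x. measure_pmf.prob (N x) X)"
    by (rule measure_pmf.integrable_const_bound[where B=1]) auto
  have "ennreal (measure_pmf.prob (bind_pmf M N) X) = emeasure (bind_pmf M N) X"
    by (simp add: measure_pmf.emeasure_eq_measure)
  also have "\<dots> = (\<integral>\<^sup>+x. ennreal (measure_pmf.prob (N x) X) \<partial>M)"
    by (subst emeasure_bind_pmf) (simp add: measure_pmf.emeasure_eq_measure)
  also have "\<dots> = ennreal (\<integral>x. measure_pmf.prob (N x) X \<partial>measure_pmf M)"
    by (rule nn_integral_eq_integral[OF int]) auto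
  finally show ?thesis by (simp add: ennreal_inj)
qed

lemma prob_cong_supp:
  assumes "\<And>x. x \<in> set_pmf p \<Longrightarrow> x \<in> A \<longleftrightarrow> x \<in> B"
  shows "measure_pmf.prob p A = measure_pmf.prob p B"
proof -
  have "A \<inter> set_pmf p = B \<inter> set_pmf p" using assms by blast
  thus ?thesis by (metis measure_Int_set_pmf)
qed

lemma int_cong_pmf:
  assumes "\<And>x. x \<in> set_pmf M \<Longrightarrow> f x = g x"
  shows "(\<integral>x. f x \<partial>measure_pmf M) = (\<integral>x. g x \<partial>measure_pmf M)"
  using assms by (intro integral_cong_AE) (auto simp: AE_measure_pmf_iff)

lemma int_ind_pmf:
  "(\<integral>x. indicator A x \<partial>measure_pmf M) = measure_pmf.prob M A"
  by simp

lemma prob_not_pmf: "measure_pmf.prob M {z. \<not> P z} = 1 - measure_pmf.prob M {z. P z}"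
  by (metis Collect_neg_eq Compl_eq_Diff_UNIV UNIV_I measure_pmf.prob_compl
    sets_measure_pmf space_measure_pmf)
lemma leaf_exists:
  assumes G: "graph VF EF" and acyc: "\<nexists>cs. is_cycle VF EF cs" and SV: "S \<subseteq> VF" and ne: "S \<noteq> {}"
  shows "\<exists>f\<in>S. \<forall>g1\<in>S. \<forall>g2\<in>S. EF f g1 \<and> EF f g2 \<longrightarrow> g1 = g2"
proof -
  have finS: "finite S" using G SV unfolding graph_def by (meson finite_subset)
  have irr: "\<And>v. \<not> EF v v" using G unfolding graph_def by blast
  define P where "P = {cs. distinct cs \<and> cs \<noteq> [] \<and> set cs \<subseteq> S \<and> (\<forall>i. Suc i < length cs \<longrightarrow> EF (cs!i) (cs!Suc i))}"
  have "P \<subseteq> {xs. set xs \<subseteq> S \<and> length xs \<le> card S}"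
    unfolding P_def using finS by (auto simp: distinct_card[symmetric] intro: card_mono)
  hence finP: "finite P" using finite_lists_length_le[OF finS] by (rule finite_subset)
  obtain s where s: "s \<in> S" using ne by blast
  have "[s] \<in> P" using s unfolding P_def by auto
  hence neP: "P \<noteq> {}" by blast
  define m where "m = Max (length ` P)"
  have "m \<in> length ` P" unfolding m_def using finP neP by (intro Max_in) auto
  then obtain cs where cs: "cs \<in> P" "length cs = m" by blast
  have maxc: "\<And>c. c \<in> P \<Longrightarrow> length c \<le> length cs"
    using cs finP unfolding m_def by auto
  have csd: "distinct cs" "cs \<noteq> []" "set cs \<subseteq> S" "\<And>i. Suc i < length cs \<Longrightarrow> EF (cs!i) (cs!Suc i)"
    using cs(1) unfolding P_def by auto
  define n where "n = length cs"
  define w where "w = last cs"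
  have wS: "w \<in> S" using csd unfolding w_def by auto
  have wn: "w = cs ! (n - 1)" unfolding w_def n_def using csd(2) by (simp add: last_conv_nth)
  have n1: "n \<ge> 1" unfolding n_def using csd(2) by (cases cs) auto
  have claim: "n \<ge> 2 \<and> u = cs ! (n - 2)" if uS: "u \<in> S" and wu: "EF w u" for u
  proof (cases "u \<in> set cs")
    case False
    have "cs @ [u] \<in> P" unfolding P_def
    proof (intro CollectI conjI allI impI)
      show "distinct (cs @ [u])" using False csd by auto
      show "cs @ [u] \<noteq> []" by simp
      show "set (cs @ [u]) \<subseteq> S" using csd uS by auto
      fix i assume i: "Suc i < length (cs @ [u])"
      show "EF ((cs @ [u]) ! i) ((cs @ [u]) ! Suc i)"
      proof (cases "Suc i < length cs")
        case True thus ?thesis using csd(4)[OF True] by (simp add: nth_append)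
      next
        case False
        hence "Suc i = n" using i n_def by simp
        hence ii: "i = n - 1" by simp
        hence "(cs @ [u]) ! i = w" "(cs @ [u]) ! Suc i = u" using wn n_def n1 \<open>Suc i = n\<close> by (auto simp: nth_append)
        thus ?thesis using wu by simp
      qed
    qed
    from maxc[OF this] show ?thesis by simp
  next
    case True
    then obtain j where j: "j < n" "cs ! j = u" unfolding n_def by (auto simp: in_set_conv_nth)
    have "j \<noteq> n - 1" using j wn wu irr by auto
    show ?thesis
    proof (cases "j = n - 2")
      case True thus ?thesis using j \<open>j \<noteq> n - 1\<close> by auto
    next
      case False
      hence jl: "j + 3 \<le> n" using j \<open>j \<noteq> n - 1\<close> by auto
      have "is_cycle VF EF (drop j cs)" unfolding is_cycle_def
      proof (intro conjI allI impI)
        show "3 \<le> length (drop j cs)" using jl n_def by simp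
        show "distinct (drop j cs)" using csd by simp
        show "set (drop j cs) \<subseteq> VF" using csd SV by (meson set_drop_subset subset_trans)
        fix i assume "Suc i < length (drop j cs)"
        thus "EF (drop j cs ! i) (drop j cs ! Suc i)" using csd(4)[of "j+i"] by simp
      next
        have "last (drop j cs) = w" unfolding w_def using j n_def by (simp add: last_drop)
        moreover have "hd (drop j cs) = u" using j n_def by (simp add: hd_drop_conv_nth)
        ultimately show "EF (last (drop j cs)) (hd (drop j cs))" using wu by simp
      qed
      thus ?thesis using acyc by blast
    qed
  qed
  show ?thesis using wS claim by metis
qed
lemma ext_bij:
  assumes fA: "finite A" and fB: "finite B" and cAB: "card A = card B"
    and m1: "\<And>y x1 x2. y \<in> A \<Longrightarrow> x1 \<in> B \<Longrightarrow> x2 \<in> B \<Longrightarrow> M y x1 \<Longrightarrow> M y x2 \<Longrightarrow> x1 = x2"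
    and m2: "\<And>x y1 y2. x \<in> B \<Longrightarrow> y1 \<in> A \<Longrightarrow> y2 \<in> A \<Longrightarrow> M y1 x \<Longrightarrow> M y2 x \<Longrightarrow> y1 = y2"
  shows "\<exists>\<sigma>. bij_betw \<sigma> A B \<and> (\<forall>y\<in>A. \<forall>x\<in>B. M y x \<longrightarrow> x = \<sigma> y)"
proof -
  define C where "C = {y\<in>A. \<exists>x\<in>B. M y x}"
  define m where "m = (\<lambda>y. THE x. x \<in> B \<and> M y x)"
  have mC: "m y \<in> B \<and> M y (m y)" if yC: "y \<in> C" for y
  proof -
    obtain x where x: "x \<in> B" "M y x" using yC unfolding C_def by auto
    have "(THE x. x \<in> B \<and> M y x) = x" using x m1 yC unfolding C_def by (intro the_equality) auto
    thus ?thesis using x unfolding m_def by simp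
  qed
  have mu: "m y = x" if "y \<in> A" "x \<in> B" "M y x" for y x
  proof -
    have yC: "y \<in> C" using that unfolding C_def by auto
    show ?thesis using m1[of y "m y" x] mC[OF yC] that by auto
  qed
  have CA': "C \<subseteq> A" unfolding C_def by auto
  have injm: "inj_on m C"
  proof (rule inj_onI)
    fix y1 y2 assume a: "y1 \<in> C" "y2 \<in> C" "m y1 = m y2"
    have "m y1 \<in> B" "M y1 (m y1)" "M y2 (m y2)" using mC[OF a(1)] mC[OF a(2)] by auto
    thus "y1 = y2" using m2[of "m y1" y1 y2] a CA' by auto
  qed
  have CA: "C \<subseteq> A" unfolding C_def by auto
  have mCB: "m ` C \<subseteq> B" using mC by auto
  have "card (A - C) = card (B - m ` C)"
    using cAB card_image[OF injm] fA fB CA mCB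
    by (metis card_Diff_subset finite_subset finite_imageI)
  then obtain \<tau> where tau: "bij_betw \<tau> (A - C) (B - m ` C)"
    using finite_same_card_bij fA fB by (metis finite_Diff)
  define \<sigma> where "\<sigma> = (\<lambda>y. if y \<in> C then m y else \<tau> y)"
  have b1: "bij_betw \<sigma> C (m ` C)"
    unfolding bij_betw_def using injm by (auto simp: \<sigma>_def inj_on_def)
  have b2: "bij_betw \<sigma> (A - C) (B - m ` C)"
    using tau by (rule bij_betw_cong[THEN iffD1, rotated]) (auto simp: \<sigma>_def)
  have "bij_betw \<sigma> (C \<union> (A - C)) (m ` C \<union> (B - m ` C))"
    by (rule bij_betw_combine[OF b1 b2]) auto
  moreover have "C \<union> (A - C) = A" "m ` C \<union> (B - m ` C) = B" using CA mCB by auto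
  ultimately have "bij_betw \<sigma> A B" by simp
  moreover have "\<forall>y\<in>A. \<forall>x\<in>B. M y x \<longrightarrow> x = \<sigma> y"
  proof (intro ballI impI)
    fix y x assume "y \<in> A" "x \<in> B" "M y x"
    moreover hence "y \<in> C" unfolding C_def by auto
    ultimately show "x = \<sigma> y" using mu unfolding \<sigma>_def by auto
  qed
  ultimately show ?thesis by blast
qed
lemma transfer_packing:
  assumes QG: "\<forall>(L :: 'a \<Rightarrow> ('a \<times> nat) set) VH EH. k_fold_cover k V E L VH EH \<longrightarrow> has_fractional_packing V L VH EH"
    and k1: "k \<ge> 1" and finV: "finite V"
    and cov: "k_fold_cover k V E (L' :: 'a \<Rightarrow> 'd set) VH' EH'"
  shows "has_fractional_packing V L' VH' EH'"
proof -
  have cc: "corr_cover V E L' VH' EH'" and cardL: "\<And>v. v \<in> V \<Longrightarrow> card (L' v) = k"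
    using cov unfolding k_fold_cover_def by auto
  have gH: "graph VH' EH'" and VHeq: "VH' = (\<Union>v\<in>V. L' v)"
    and disj: "\<And>u v. u \<in> V \<Longrightarrow> v \<in> V \<Longrightarrow> u \<noteq> v \<Longrightarrow> L' u \<inter> L' v = {}"
    and cliq: "\<And>v x y. v \<in> V \<Longrightarrow> x \<in> L' v \<Longrightarrow> y \<in> L' v \<Longrightarrow> x \<noteq> y \<Longrightarrow> EH' x y"
    and nonadj: "\<And>u v x y. u \<in> V \<Longrightarrow> v \<in> V \<Longrightarrow> u \<noteq> v \<Longrightarrow> \<not> E u v \<Longrightarrow> x \<in> L' u \<Longrightarrow> y \<in> L' v \<Longrightarrow> \<not> EH' x y"
    and match1: "\<And>u v x y1 y2. u \<in> V \<Longrightarrow> v \<in> V \<Longrightarrow> E u v \<Longrightarrow> x \<in> L' u \<Longrightarrow> y1 \<in> L' v \<Longrightarrow> y2 \<in> L' v \<Longrightarrow> EH' x y1 \<Longrightarrow> EH' x y2 \<Longrightarrow> y1 = y2"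
    and match2: "\<And>u v y x1 x2. u \<in> V \<Longrightarrow> v \<in> V \<Longrightarrow> E u v \<Longrightarrow> y \<in> L' v \<Longrightarrow> x1 \<in> L' u \<Longrightarrow> x2 \<in> L' u \<Longrightarrow> EH' x1 y \<Longrightarrow> EH' x2 y \<Longrightarrow> x1 = x2"
    using cc unfolding corr_cover_def by (auto 0 0)
  have sym: "\<And>x y. EH' x y \<Longrightarrow> EH' y x" and irr: "\<And>x. \<not> EH' x x" and finVH: "finite VH'"
    using gH unfolding graph_def by auto
  have finL: "\<And>v. v \<in> V \<Longrightarrow> finite (L' v)" using cardL k1
    by (metis card.infinite not_one_le_zero)
  have "\<forall>v\<in>V. \<exists>g. bij_betw g {0..<k} (L' v)"
    using finL cardL ex_bij_betw_nat_finite by metis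
  then obtain \<phi> where phi: "\<And>v. v \<in> V \<Longrightarrow> bij_betw (\<phi> v) {0..<k} (L' v)" by metis
  define \<Psi> where "\<Psi> = (\<lambda>(v::'a,i::nat). \<phi> v i)"
  define L0 where "L0 = (\<lambda>v::'a. {v} \<times> {0..<k})"
  define VH0 where "VH0 = V \<times> {0..<k}"
  define EH0 where "EH0 = (\<lambda>a b. a \<in> VH0 \<and> b \<in> VH0 \<and> EH' (\<Psi> a) (\<Psi> b))"
  have PsiL: "\<And>v i. v \<in> V \<Longrightarrow> i < k \<Longrightarrow> \<Psi> (v,i) \<in> L' v"
  proof -
    fix v i assume "v \<in> V" "i < k"
    thus "\<Psi> (v,i) \<in> L' v" using phi[of v] unfolding \<Psi>_def bij_betw_def by auto
  qed
  have injPsi: "inj_on \<Psi> VH0"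
  proof (rule inj_onI)
    fix a b assume a: "a \<in> VH0" and b: "b \<in> VH0" and eq: "\<Psi> a = \<Psi> b"
    obtain v i where av: "a = (v,i)" "v \<in> V" "i < k" using a unfolding VH0_def by auto
    obtain u j where bu: "b = (u,j)" "u \<in> V" "j < k" using b unfolding VH0_def by auto
    have "v = u" using disj[of v u] PsiL[of v i] PsiL[of u j] av bu eq by auto
    moreover have "i = j" using phi[of v] av bu eq \<open>v = u\<close> unfolding \<Psi>_def bij_betw_def inj_on_def by auto
    ultimately show "a = b" using av bu by simp
  qed
  have imgL: "\<And>v. v \<in> V \<Longrightarrow> \<Psi> ` L0 v = L' v"
  proof -
    fix v assume v: "v \<in> V"
    have "\<Psi> ` L0 v = \<phi> v ` {0..<k}" unfolding \<Psi>_def L0_def by force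
    thus "\<Psi> ` L0 v = L' v" using phi[OF v] unfolding bij_betw_def by simp
  qed
  have L0sub: "\<And>v. v \<in> V \<Longrightarrow> L0 v \<subseteq> VH0" unfolding L0_def VH0_def by auto
  have cov0: "k_fold_cover k V E L0 VH0 EH0"
    unfolding k_fold_cover_def corr_cover_def
  proof (intro conjI ballI allI impI)
    show "graph VH0 EH0" unfolding graph_def
      using finVH finL sym irr finV unfolding VH0_def EH0_def by auto
    show "\<And>v. v \<in> V \<Longrightarrow> L0 v \<noteq> {}" using k1 unfolding L0_def by auto
    show "VH0 = \<Union> (L0 ` V)" unfolding L0_def VH0_def by auto
    show "\<And>u v. u \<in> V \<Longrightarrow> v \<in> V \<Longrightarrow> u \<noteq> v \<Longrightarrow> L0 u \<inter> L0 v = {}" unfolding L0_def by auto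
    show "\<And>v. v \<in> V \<Longrightarrow> card (L0 v) = k" unfolding L0_def by (simp add: card_cartesian_product)
  next
    fix v x y assume v: "v \<in> V" and x: "x \<in> L0 v" and y: "y \<in> L0 v" and ne: "x \<noteq> y"
    have "\<Psi> x \<noteq> \<Psi> y" using injPsi L0sub[OF v] x y ne by (meson inj_onD subsetD)
    thus "EH0 x y" unfolding EH0_def using cliq[OF v] imgL[OF v] L0sub[OF v] x y by blast
  next
    fix u v x y assume "u \<in> V" "v \<in> V" "u \<noteq> v \<and> \<not> E u v" "x \<in> L0 u" "y \<in> L0 v"
    thus "\<not> EH0 x y" unfolding EH0_def using nonadj[of u v "\<Psi> x" "\<Psi> y"] imgL by blast
  next
    fix u v x y1 y2 assume uv: "u \<in> V" "v \<in> V" "E u v" and x: "x \<in> L0 u" and y: "y1 \<in> L0 v" "y2 \<in> L0 v"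
      and e: "EH0 x y1 \<and> EH0 x y2"
    have "\<Psi> y1 = \<Psi> y2" using match1[OF uv, of "\<Psi> x" "\<Psi> y1" "\<Psi> y2"] imgL uv x y e unfolding EH0_def by blast
    thus "y1 = y2" using injPsi L0sub uv y by (meson inj_onD subsetD)
  next
    fix u v y x1 x2 assume uv: "u \<in> V" "v \<in> V" "E u v" and y: "y \<in> L0 v" and x: "x1 \<in> L0 u" "x2 \<in> L0 u"
      and e: "EH0 x1 y \<and> EH0 x2 y"
    have "\<Psi> x1 = \<Psi> x2" using match2[OF uv, of "\<Psi> y" "\<Psi> x1" "\<Psi> x2"] imgL uv x y e unfolding EH0_def by blast
    thus "x1 = x2" using injPsi L0sub uv x by (meson inj_onD subsetD)
  qed
  have "has_fractional_packing V L0 VH0 EH0" using QG cov0 by blast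
  then obtain p0 where p0s: "set_pmf p0 \<subseteq> {I. indep_transversal V L0 VH0 EH0 I}"
    and p0m: "\<And>v x. v \<in> V \<Longrightarrow> x \<in> L0 v \<Longrightarrow> measure_pmf.prob p0 {I. x \<in> I} = 1 / real (card (L0 v))"
    unfolding has_fractional_packing_def by blast
  define p where "p = map_pmf (image \<Psi>) p0"
  show ?thesis unfolding has_fractional_packing_def
  proof (intro exI[of _ p] conjI ballI)
    show "set_pmf p \<subseteq> {I. indep_transversal V L' VH' EH' I}"
    proof
      fix J assume "J \<in> set_pmf p"
      then obtain I where I: "I \<in> set_pmf p0" "J = \<Psi> ` I" unfolding p_def by auto
      have it: "indep_transversal V L0 VH0 EH0 I" using I p0s by auto
      have IV: "I \<subseteq> VH0" using it unfolding indep_transversal_def by auto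
      have "\<Psi> ` VH0 = VH'" unfolding VHeq using imgL unfolding VH0_def L0_def by auto
      hence "J \<subseteq> VH'" using IV I by auto
      moreover have "\<forall>x\<in>J. \<forall>y\<in>J. \<not> EH' x y"
      proof (intro ballI)
        fix x y assume "x \<in> J" "y \<in> J"
        then obtain a b where "a \<in> I" "b \<in> I" "x = \<Psi> a" "y = \<Psi> b" using I by auto
        thus "\<not> EH' x y" using it IV unfolding indep_transversal_def EH0_def by blast
      qed
      moreover have "card (J \<inter> L' v) = 1" if v: "v \<in> V" for v
      proof -
        have "J \<inter> L' v = \<Psi> ` (I \<inter> L0 v)"
        proof
          show "\<Psi> ` (I \<inter> L0 v) \<subseteq> J \<inter> L' v" using I imgL[OF v] by auto
          show "J \<inter> L' v \<subseteq> \<Psi> ` (I \<inter> L0 v)"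
          proof
            fix z assume z: "z \<in> J \<inter> L' v"
            then obtain a where a: "a \<in> I" "z = \<Psi> a" using I by auto
            obtain u i where ai: "a = (u,i)" "u \<in> V" "i < k" using a IV unfolding VH0_def by auto
            have "u = v" using disj[of u v] PsiL[of u i] ai a z v by auto
            thus "z \<in> \<Psi> ` (I \<inter> L0 v)" using a ai unfolding L0_def by auto
          qed
        qed
        moreover have "inj_on \<Psi> (I \<inter> L0 v)" using injPsi IV by (meson inj_on_subset le_infI1)
        ultimately show ?thesis using it v unfolding indep_transversal_def by (simp add: card_image)
      qed
      ultimately show "J \<in> {I. indep_transversal V L' VH' EH' I}" unfolding indep_transversal_def by auto
    qed
  next
    fix v x assume v: "v \<in> V" and x: "x \<in> L' v"
    obtain a where a: "a \<in> L0 v" "x = \<Psi> a" using imgL[OF v] x by blast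
    have "measure_pmf.prob p {J. x \<in> J} = measure_pmf.prob p0 {I. \<Psi> a \<in> \<Psi> ` I}"
      unfolding p_def using a by simp
    also have "\<dots> = measure_pmf.prob p0 {I. a \<in> I}"
    proof (rule prob_cong_supp)
      fix I assume "I \<in> set_pmf p0"
      hence IV: "I \<subseteq> VH0" using p0s unfolding indep_transversal_def by auto
      show "I \<in> {I. \<Psi> a \<in> \<Psi> ` I} \<longleftrightarrow> I \<in> {I. a \<in> I}"
        using injPsi IV L0sub[OF v] a(1) by (auto dest: inj_onD)
    qed
    also have "\<dots> = 1 / real (card (L0 v))" using p0m[OF v a(1)] .
    also have "card (L0 v) = card (L' v)" using cardL[OF v] unfolding L0_def by (simp add: card_cartesian_product)
    finally show "measure_pmf.prob p {I. x \<in> I} = 1 / real (card (L' v))" .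
  qed
qed
lemma restrict_packing:
  fixes V :: "'a set" and VF :: "'c set"
  assumes QW: "\<forall>(L :: ('a \<times> 'c) \<Rightarrow> (('a \<times> 'c) \<times> nat) set) VH EH.
      k_fold_cover k (V \<times> VF) (cart_prod_edges E EF) L VH EH \<longrightarrow> has_fractional_packing (V \<times> VF) L VH EH"
    and f0: "f0 \<in> VF" and gF: "graph VF EF" and gG: "graph V E"
  shows "\<forall>(L :: 'a \<Rightarrow> ('a \<times> nat) set) VH EH. k_fold_cover k V E L VH EH \<longrightarrow> has_fractional_packing V L VH EH"
proof (intro allI impI)
  fix L :: "'a \<Rightarrow> ('a \<times> nat) set" and VH EH
  assume cov: "k_fold_cover k V E L VH EH"
  have cc: "corr_cover V E L VH EH" and cardL: "\<And>v. v \<in> V \<Longrightarrow> card (L v) = k"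
    using cov unfolding k_fold_cover_def by auto
  have gH: "graph VH EH" and VHeq: "VH = (\<Union>v\<in>V. L v)"
    and Lne: "\<And>v. v \<in> V \<Longrightarrow> L v \<noteq> {}"
    and disj: "\<And>u v. u \<in> V \<Longrightarrow> v \<in> V \<Longrightarrow> u \<noteq> v \<Longrightarrow> L u \<inter> L v = {}"
    and cliq: "\<And>v x y. v \<in> V \<Longrightarrow> x \<in> L v \<Longrightarrow> y \<in> L v \<Longrightarrow> x \<noteq> y \<Longrightarrow> EH x y"
    and nonadj: "\<And>u v x y. u \<in> V \<Longrightarrow> v \<in> V \<Longrightarrow> u \<noteq> v \<Longrightarrow> \<not> E u v \<Longrightarrow> x \<in> L u \<Longrightarrow> y \<in> L v \<Longrightarrow> \<not> EH x y"
    and match1: "\<And>u v x y1 y2. u \<in> V \<Longrightarrow> v \<in> V \<Longrightarrow> E u v \<Longrightarrow> x \<in> L u \<Longrightarrow> y1 \<in> L v \<Longrightarrow> y2 \<in> L v \<Longrightarrow> EH x y1 \<Longrightarrow> EH x y2 \<Longrightarrow> y1 = y2"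
    and match2: "\<And>u v y x1 x2. u \<in> V \<Longrightarrow> v \<in> V \<Longrightarrow> E u v \<Longrightarrow> y \<in> L v \<Longrightarrow> x1 \<in> L u \<Longrightarrow> x2 \<in> L u \<Longrightarrow> EH x1 y \<Longrightarrow> EH x2 y \<Longrightarrow> x1 = x2"
    using cc unfolding corr_cover_def by (auto 0 0)
  have sym: "\<And>x y. EH x y \<Longrightarrow> EH y x" and irr: "\<And>x. \<not> EH x x" and finVH: "finite VH"
    and EHin: "\<And>x y. EH x y \<Longrightarrow> x \<in> VH \<and> y \<in> VH"
    using gH unfolding graph_def by auto
  have irrF: "\<And>f. \<not> EF f f" using gF unfolding graph_def by auto
  have finV: "finite V" and finVF: "finite VF" using gG gF unfolding graph_def by auto
  define \<theta> :: "'c \<Rightarrow> 'a \<times> nat \<Rightarrow> ('a \<times> 'c) \<times> nat" where "\<theta> = (\<lambda>f z. ((fst z, f), snd z))"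
  define \<pi> :: "('a \<times> 'c) \<times> nat \<Rightarrow> 'a \<times> nat" where "\<pi> = (\<lambda>x. (fst (fst x), snd x))"
  define \<sigma> :: "('a \<times> 'c) \<times> nat \<Rightarrow> 'c" where "\<sigma> = (\<lambda>x. snd (fst x))"
  have pt[simp]: "\<And>f z. \<pi> (\<theta> f z) = z" and st[simp]: "\<And>f z. \<sigma> (\<theta> f z) = f"
    and tps: "\<And>x. \<theta> (\<sigma> x) (\<pi> x) = x"
    unfolding \<theta>_def \<pi>_def \<sigma>_def by auto
  have injt: "\<And>f A. inj_on (\<theta> f) A" by (metis inj_onI pt)
  define L2 where "L2 = (\<lambda>w::'a \<times> 'c. \<theta> (snd w) ` L (fst w))"
  define VH2 where "VH2 = (\<Union>w\<in>V \<times> VF. L2 w)"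
  define EH2 where "EH2 = (\<lambda>x y. \<sigma> x = \<sigma> y \<and> \<sigma> x \<in> VF \<and> EH (\<pi> x) (\<pi> y))"
  let ?W = "V \<times> VF" and ?EW = "cart_prod_edges E EF"
  have L2mem: "x \<in> L2 (v,f) \<longleftrightarrow> \<sigma> x = f \<and> \<pi> x \<in> L v" for x v f
    unfolding L2_def by (metis (no_types, lifting) fst_conv image_iff pt snd_conv st tps)
  have cov2: "k_fold_cover k ?W ?EW L2 VH2 EH2"
    unfolding k_fold_cover_def corr_cover_def
  proof (intro conjI ballI allI impI)
    show "graph VH2 EH2" unfolding graph_def
    proof (intro conjI allI impI)
      show "finite VH2" unfolding VH2_def L2_def using finV finVF finVH VHeq
        by (auto intro!: finite_imageI intro: finite_subset)
      fix x y assume e: "EH2 x y"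
      have "\<pi> x \<in> VH" "\<pi> y \<in> VH" using EHin e unfolding EH2_def by blast+
      then obtain u u' where u: "u \<in> V" "\<pi> x \<in> L u" and u': "u' \<in> V" "\<pi> y \<in> L u'" using VHeq by blast
      show "x \<in> VH2" unfolding VH2_def using L2mem u e unfolding EH2_def by blast
      show "y \<in> VH2" unfolding VH2_def using L2mem u' e unfolding EH2_def by (metis SigmaI UN_iff)
      show "EH2 y x" using e sym unfolding EH2_def by auto
    next
      show "\<And>v. \<not> EH2 v v" using irr unfolding EH2_def by auto
    qed
    show "\<And>w. w \<in> ?W \<Longrightarrow> L2 w \<noteq> {}" using Lne unfolding L2_def by auto
    show "VH2 = \<Union> (L2 ` ?W)" unfolding VH2_def by simp
    show "\<And>w. w \<in> ?W \<Longrightarrow> card (L2 w) = k" unfolding L2_def using cardL by (auto simp: card_image[OF injt])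
  next
    fix w w' assume w: "w \<in> ?W" "w' \<in> ?W" "w \<noteq> w'"
    obtain v f v' f' where ww: "w = (v,f)" "w' = (v',f')" by fastforce
    show "L2 w \<inter> L2 w' = {}" using disj[of v v'] w ww L2mem by auto
  next
    fix w x y assume w: "w \<in> ?W" and x: "x \<in> L2 w" and y: "y \<in> L2 w" and ne: "x \<noteq> y"
    obtain v f where ww: "w = (v,f)" by fastforce
    have "\<pi> x \<noteq> \<pi> y" using ne x y ww L2mem by (metis tps)
    thus "EH2 x y" using cliq[of v "\<pi> x" "\<pi> y"] w x y ww L2mem unfolding EH2_def by auto
  next
    fix w w' x y assume w: "w \<in> ?W" "w' \<in> ?W" "w \<noteq> w' \<and> \<not> ?EW w w'" and x: "x \<in> L2 w" and y: "y \<in> L2 w'"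
    obtain v f v' f' where ww: "w = (v,f)" "w' = (v',f')" by fastforce
    show "\<not> EH2 x y"
    proof
      assume e: "EH2 x y"
      hence "f = f'" using x y ww L2mem unfolding EH2_def by auto
      hence "v \<noteq> v'" "\<not> E v v'" using w ww unfolding cart_prod_edges_def by auto
      thus False using nonadj[of v v' "\<pi> x" "\<pi> y"] e w x y ww L2mem unfolding EH2_def by auto
    qed
  next
    fix w w' x y1 y2 assume w: "w \<in> ?W" "w' \<in> ?W" "?EW w w'" and x: "x \<in> L2 w" and y: "y1 \<in> L2 w'" "y2 \<in> L2 w'"
      and e: "EH2 x y1 \<and> EH2 x y2"
    obtain v f v' f' where ww: "w = (v,f)" "w' = (v',f')" by fastforce
    have "f = f'" using e x y ww L2mem unfolding EH2_def by auto
    hence "E v v'" using w ww irrF unfolding cart_prod_edges_def by auto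
    hence "\<pi> y1 = \<pi> y2" using match1[of v v' "\<pi> x" "\<pi> y1" "\<pi> y2"] w ww x y e L2mem unfolding EH2_def by auto
    moreover have "\<sigma> y1 = \<sigma> y2" using y ww L2mem by auto
    ultimately show "y1 = y2" by (metis tps)
  next
    fix w w' y x1 x2 assume w: "w \<in> ?W" "w' \<in> ?W" "?EW w w'" and y: "y \<in> L2 w'" and x: "x1 \<in> L2 w" "x2 \<in> L2 w"
      and e: "EH2 x1 y \<and> EH2 x2 y"
    obtain v f v' f' where ww: "w = (v,f)" "w' = (v',f')" by fastforce
    have "f = f'" using e x y ww L2mem unfolding EH2_def by auto
    hence "E v v'" using w ww irrF unfolding cart_prod_edges_def by auto
    hence "\<pi> x1 = \<pi> x2" using match2[of v v' "\<pi> y" "\<pi> x1" "\<pi> x2"] w ww x y e L2mem unfolding EH2_def by auto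
    moreover have "\<sigma> x1 = \<sigma> x2" using x ww L2mem by auto
    ultimately show "x1 = x2" by (metis tps)
  qed
  have "has_fractional_packing ?W L2 VH2 EH2" using QW cov2 by blast
  then obtain p2 where p2s: "set_pmf p2 \<subseteq> {I. indep_transversal ?W L2 VH2 EH2 I}"
    and p2m: "\<And>w x. w \<in> ?W \<Longrightarrow> x \<in> L2 w \<Longrightarrow> measure_pmf.prob p2 {I. x \<in> I} = 1 / real (card (L2 w))"
    unfolding has_fractional_packing_def by blast
  define p where "p = map_pmf (\<lambda>I. \<theta> f0 -` I) p2"
  show "has_fractional_packing V L VH EH" unfolding has_fractional_packing_def
  proof (intro exI[of _ p] conjI ballI)
    show "set_pmf p \<subseteq> {I. indep_transversal V L VH EH I}"
    proof
      fix J assume "J \<in> set_pmf p"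
      then obtain I where I: "I \<in> set_pmf p2" "J = \<theta> f0 -` I" unfolding p_def by auto
      have it: "indep_transversal ?W L2 VH2 EH2 I" using I p2s by auto
      have IV: "I \<subseteq> VH2" using it unfolding indep_transversal_def by auto
      have "J \<subseteq> VH"
      proof
        fix z assume "z \<in> J"
        hence "\<theta> f0 z \<in> VH2" using I IV by auto
        then obtain u f where "u \<in> V" "\<theta> f0 z \<in> L2 (u,f)" unfolding VH2_def by auto
        thus "z \<in> VH" using L2mem VHeq by fastforce
      qed
      moreover have "\<forall>x\<in>J. \<forall>y\<in>J. \<not> EH x y"
      proof (intro ballI)
        fix x y assume "x \<in> J" "y \<in> J"
        hence "\<theta> f0 x \<in> I" "\<theta> f0 y \<in> I" using I by auto
        hence "\<not> EH2 (\<theta> f0 x) (\<theta> f0 y)" using it unfolding indep_transversal_def by blast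
        thus "\<not> EH x y" using f0 unfolding EH2_def by simp
      qed
      moreover have "card (J \<inter> L v) = 1" if v: "v \<in> V" for v
      proof -
        have "\<theta> f0 ` (J \<inter> L v) = I \<inter> L2 (v,f0)" using I L2mem by (auto simp: L2_def)
        hence "card (J \<inter> L v) = card (I \<inter> L2 (v,f0))" by (metis card_image injt)
        thus ?thesis using it v f0 unfolding indep_transversal_def by auto
      qed
      ultimately show "J \<in> {I. indep_transversal V L VH EH I}" unfolding indep_transversal_def by auto
    qed
  next
    fix v z assume v: "v \<in> V" and z: "z \<in> L v"
    have "measure_pmf.prob p {J. z \<in> J} = measure_pmf.prob p2 {I. \<theta> f0 z \<in> I}"
      unfolding p_def by simp
    also have "\<dots> = 1 / real (card (L2 (v,f0)))" using p2m[of "(v,f0)" "\<theta> f0 z"] v f0 z L2mem by auto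
    also have "card (L2 (v,f0)) = card (L v)" unfolding L2_def by (simp add: card_image[OF injt])
    finally show "measure_pmf.prob p {J. z \<in> J} = 1 / real (card (L v))" .
  qed
qed
locale pk =
  fixes V :: "'a set" and E :: "'a \<Rightarrow> 'a \<Rightarrow> bool" and VF :: "'c set" and EF :: "'c \<Rightarrow> 'c \<Rightarrow> bool"
    and L :: "'a \<times> 'c \<Rightarrow> 'b set" and VH :: "'b set" and EH :: "'b \<Rightarrow> 'b \<Rightarrow> bool" and k :: nat
  assumes gG: "graph V E" and gF: "graph VF EF" and acyc: "\<nexists>cs. is_cycle VF EF cs"
    and cov: "k_fold_cover (Suc k) (V \<times> VF) (cart_prod_edges E EF) L VH EH"
    and k1: "k \<ge> 1"
    and QG: "\<forall>(L' :: 'a \<Rightarrow> 'b set) VH' EH'. k_fold_cover k V E L' VH' EH' \<longrightarrow> has_fractional_packing V L' VH' EH'"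
begin

abbreviation "W \<equiv> V \<times> VF"
abbreviation "EW \<equiv> cart_prod_edges E EF"

lemma cc: "corr_cover W EW L VH EH" and cardL: "\<And>w. w \<in> W \<Longrightarrow> card (L w) = Suc k"
  using cov unfolding k_fold_cover_def by auto

lemma ccp1: "graph VH EH" using cc unfolding corr_cover_def by (elim conjE) assumption
lemma ccp2: "VH = (\<Union>w\<in>W. L w)" using cc unfolding corr_cover_def by (elim conjE) assumption
lemma ccp3: "\<forall>u\<in>W. \<forall>v\<in>W. u \<noteq> v \<longrightarrow> L u \<inter> L v = {}" using cc unfolding corr_cover_def by (elim conjE) assumption
lemma ccp4: "\<forall>v\<in>W. \<forall>x\<in>L v. \<forall>y\<in>L v. x \<noteq> y \<longrightarrow> EH x y" using cc unfolding corr_cover_def by (elim conjE) assumption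
lemma ccp5: "\<forall>u\<in>W. \<forall>v\<in>W. u \<noteq> v \<and> \<not> EW u v \<longrightarrow> (\<forall>x\<in>L u. \<forall>y\<in>L v. \<not> EH x y)" using cc unfolding corr_cover_def by (elim conjE) assumption
lemma ccp6: "\<forall>u\<in>W. \<forall>v\<in>W. EW u v \<longrightarrow>
          (\<forall>x\<in>L u. \<forall>y1\<in>L v. \<forall>y2\<in>L v. EH x y1 \<and> EH x y2 \<longrightarrow> y1 = y2)
        \<and> (\<forall>y\<in>L v. \<forall>x1\<in>L u. \<forall>x2\<in>L u. EH x1 y \<and> EH x2 y \<longrightarrow> x1 = x2)"
  using cc unfolding corr_cover_def by (elim conjE) assumption
lemmas ccp = ccp1 ccp2 ccp3 ccp4 ccp5 ccp6

lemma gH: "graph VH EH" and VHeq: "VH = (\<Union>w\<in>W. L w)"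
  using ccp by blast+

lemma disj: "u \<in> W \<Longrightarrow> v \<in> W \<Longrightarrow> u \<noteq> v \<Longrightarrow> L u \<inter> L v = {}"
  using ccp(3) by blast

lemma cliq: "v \<in> W \<Longrightarrow> x \<in> L v \<Longrightarrow> y \<in> L v \<Longrightarrow> x \<noteq> y \<Longrightarrow> EH x y"
  using ccp(4) by blast

lemma nonadj: "u \<in> W \<Longrightarrow> v \<in> W \<Longrightarrow> u \<noteq> v \<Longrightarrow> \<not> EW u v \<Longrightarrow> x \<in> L u \<Longrightarrow> y \<in> L v \<Longrightarrow> \<not> EH x y"
  using ccp(5) by blast

lemma match1: "u \<in> W \<Longrightarrow> v \<in> W \<Longrightarrow> EW u v \<Longrightarrow> x \<in> L u \<Longrightarrow> y1 \<in> L v \<Longrightarrow> y2 \<in> L v \<Longrightarrow> EH x y1 \<Longrightarrow> EH x y2 \<Longrightarrow> y1 = y2"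
  using ccp(6) by blast

lemma match2: "u \<in> W \<Longrightarrow> v \<in> W \<Longrightarrow> EW u v \<Longrightarrow> y \<in> L v \<Longrightarrow> x1 \<in> L u \<Longrightarrow> x2 \<in> L u \<Longrightarrow> EH x1 y \<Longrightarrow> EH x2 y \<Longrightarrow> x1 = x2"
  using ccp(6) by blast

lemma sym: "EH x y \<Longrightarrow> EH y x" and irr: "\<not> EH x x" and finVH: "finite VH"
  and EHin: "EH x y \<Longrightarrow> x \<in> VH \<and> y \<in> VH"
  using gH unfolding graph_def by auto

lemma irrF: "\<not> EF f f" and symF: "EF f g \<Longrightarrow> EF g f" and finV: "finite V" and finVF: "finite VF"
  using gF gG unfolding graph_def by auto

lemma finL: "w \<in> W \<Longrightarrow> finite (L w)"
  using cardL by (metis card.infinite nat.distinct(1))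

definition PT :: "'c set \<Rightarrow> 'b set \<Rightarrow> bool" where
  "PT S I \<longleftrightarrow> I \<subseteq> (\<Union>w\<in>V \<times> S. L w) \<and> (\<forall>x\<in>I. \<forall>y\<in>I. \<not> EH x y) \<and> (\<forall>w\<in>V \<times> S. card (I \<inter> L w) = 1)"

definition MP :: "'c set \<Rightarrow> 'b set pmf \<Rightarrow> bool" where
  "MP S p \<longleftrightarrow> (\<forall>w\<in>V \<times> S. \<forall>x\<in>L w. measure_pmf.prob p {I. x \<in> I} = 1 / real (Suc k))"

lemma PT_notin:
  assumes "PT S I" "S \<subseteq> VF" "x \<in> I" "v \<in> V" "f \<in> VF" "f \<notin> S"
  shows "x \<notin> L (v,f)"
proof
  assume xL: "x \<in> L (v,f)"
  obtain w where w: "w \<in> V \<times> S" "x \<in> L w" using assms unfolding PT_def by auto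
  have "w \<noteq> (v,f)" using w assms by auto
  thus False using disj[of w "(v,f)"] w xL assms by auto
qed

lemma step:
  fixes p' :: "'b set pmf" and R :: "'b set \<Rightarrow> ('a \<Rightarrow> 'b) pmf" and f :: 'c
  assumes S': "S' \<subseteq> VF" and f: "f \<in> VF" "f \<notin> S'"
    and p's: "\<And>I. I \<in> set_pmf p' \<Longrightarrow> PT S' I" and p'm: "MP S' p'"
    and Rs: "\<And>I' h v. I' \<in> set_pmf p' \<Longrightarrow> h \<in> set_pmf (R I') \<Longrightarrow> v \<in> V \<Longrightarrow>
               h v \<in> L (v,f) \<and> (\<forall>x\<in>L (v,f). \<forall>y\<in>I'. EH y x \<longrightarrow> x = h v)"
    and Rm: "\<And>v x. v \<in> V \<Longrightarrow> x \<in> L (v,f) \<Longrightarrow>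
       measure_pmf.prob (p' \<bind> (\<lambda>I'. map_pmf (\<lambda>h. (I',h)) (R I'))) {z. snd z v = x} = 1 / real (Suc k)"
  shows "\<exists>p. (\<forall>I\<in>set_pmf p. PT (insert f S') I) \<and> MP (insert f S') p"
proof -
  define Lr where "Lr = (\<lambda>(h::'a \<Rightarrow> 'b) v. L (v,f) - {h v})"
  define VHr where "VHr = (\<lambda>h. \<Union>v\<in>V. Lr h v)"
  define EHr where "EHr = (\<lambda>h x y. x \<in> VHr h \<and> y \<in> VHr h \<and> EH x y)"
  have covr: "k_fold_cover k V E (Lr h) (VHr h) (EHr h)" if good: "\<And>v. v \<in> V \<Longrightarrow> h v \<in> L (v,f)" for h
    unfolding k_fold_cover_def corr_cover_def
  proof (intro conjI ballI allI impI)
    show "graph (VHr h) (EHr h)" unfolding graph_def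
    proof (intro conjI allI impI)
      have "VHr h \<subseteq> VH" unfolding VHr_def Lr_def VHeq using f by auto
      thus "finite (VHr h)" using finVH by (rule finite_subset)
    qed (auto simp: EHr_def sym irr)
    show cardr: "\<And>v. v \<in> V \<Longrightarrow> card (Lr h v) = k"
      unfolding Lr_def using good cardL f finL by (simp add: card_Diff_singleton)
    show "\<And>v. v \<in> V \<Longrightarrow> Lr h v \<noteq> {}" using cardr k1 by (metis card.empty not_one_le_zero)
    show "VHr h = \<Union> (Lr h ` V)" unfolding VHr_def ..
  next
    fix u v assume "u \<in> V" "v \<in> V" "u \<noteq> v"
    thus "Lr h u \<inter> Lr h v = {}" using disj[of "(u,f)" "(v,f)"] f unfolding Lr_def by auto
  next
    fix v x y assume v: "v \<in> V" and x: "x \<in> Lr h v" and y: "y \<in> Lr h v" and ne: "x \<noteq> y"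
    have "EH x y" using cliq[of "(v,f)" x y] v x y ne f unfolding Lr_def by auto
    thus "EHr h x y" unfolding EHr_def VHr_def using v x y by auto
  next
    fix u v x y assume uv: "u \<in> V" "v \<in> V" "u \<noteq> v \<and> \<not> E u v" and x: "x \<in> Lr h u" and y: "y \<in> Lr h v"
    have "\<not> EW (u,f) (v,f)" using uv unfolding cart_prod_edges_def by auto
    hence "\<not> EH x y" using nonadj[of "(u,f)" "(v,f)" x y] uv x y f unfolding Lr_def by auto
    thus "\<not> EHr h x y" unfolding EHr_def by auto
  next
    fix u v x y1 y2 assume uv: "u \<in> V" "v \<in> V" "E u v" and x: "x \<in> Lr h u" and y: "y1 \<in> Lr h v" "y2 \<in> Lr h v"
      and e: "EHr h x y1 \<and> EHr h x y2"
    have "EW (u,f) (v,f)" using uv unfolding cart_prod_edges_def by auto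
    thus "y1 = y2" using match1[of "(u,f)" "(v,f)" x y1 y2] uv x y e f unfolding Lr_def EHr_def by auto
  next
    fix u v y x1 x2 assume uv: "u \<in> V" "v \<in> V" "E u v" and y: "y \<in> Lr h v" and x: "x1 \<in> Lr h u" "x2 \<in> Lr h u"
      and e: "EHr h x1 y \<and> EHr h x2 y"
    have "EW (u,f) (v,f)" using uv unfolding cart_prod_edges_def by auto
    thus "x1 = x2" using match2[of "(u,f)" "(v,f)" y x1 x2] uv x y e f unfolding Lr_def EHr_def by auto
  qed
  define Q where "Q = (\<lambda>h. SOME q. set_pmf q \<subseteq> {J. indep_transversal V (Lr h) (VHr h) (EHr h) J}
        \<and> (\<forall>v\<in>V. \<forall>x\<in>Lr h v. measure_pmf.prob q {J. x \<in> J} = 1 / real (card (Lr h v))))"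
  have Qp: "set_pmf (Q h) \<subseteq> {J. indep_transversal V (Lr h) (VHr h) (EHr h) J}
        \<and> (\<forall>v\<in>V. \<forall>x\<in>Lr h v. measure_pmf.prob (Q h) {J. x \<in> J} = 1 / real (card (Lr h v)))"
    if good: "\<And>v. v \<in> V \<Longrightarrow> h v \<in> L (v,f)" for h
  proof -
    have "has_fractional_packing V (Lr h) (VHr h) (EHr h)" using QG covr[OF good] by blast
    thus ?thesis unfolding Q_def has_fractional_packing_def by (rule someI_ex)
  qed
  define D where "D = p' \<bind> (\<lambda>I'. map_pmf (\<lambda>h. (I',h)) (R I'))"
  define p where "p = D \<bind> (\<lambda>z. map_pmf (\<lambda>J. fst z \<union> J) (Q (snd z)))"
  have Dsupp: "fst z \<in> set_pmf p' \<and> snd z \<in> set_pmf (R (fst z))" if "z \<in> set_pmf D" for z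
    using that unfolding D_def by auto
  have Jsub: "J \<subseteq> (\<Union>v\<in>V. L (v,f))" if "z \<in> set_pmf D" "J \<in> set_pmf (Q (snd z))" for z J
  proof -
    have "\<And>v. v \<in> V \<Longrightarrow> snd z v \<in> L (v,f)" using Rs Dsupp that(1) by blast
    hence "indep_transversal V (Lr (snd z)) (VHr (snd z)) (EHr (snd z)) J" using Qp that(2) by blast
    thus ?thesis unfolding indep_transversal_def VHr_def Lr_def by auto
  qed
  show ?thesis
  proof (intro exI[of _ p] conjI ballI)
    fix I assume "I \<in> set_pmf p"
    then obtain z J where z: "z \<in> set_pmf D" and J: "J \<in> set_pmf (Q (snd z))" and I: "I = fst z \<union> J"
      unfolding p_def by auto
    define I' where "I' = fst z"
    define h where "h = snd z"
    have I'p: "I' \<in> set_pmf p'" and hR: "h \<in> set_pmf (R I')" using Dsupp[OF z] unfolding I'_def h_def by auto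
    have good: "\<And>v. v \<in> V \<Longrightarrow> h v \<in> L (v,f)" and block: "\<And>v x y. v \<in> V \<Longrightarrow> x \<in> L (v,f) \<Longrightarrow> y \<in> I' \<Longrightarrow> EH y x \<Longrightarrow> x = h v"
      using Rs[OF I'p hR] by blast+
    have itJ: "indep_transversal V (Lr h) (VHr h) (EHr h) J" using Qp[OF good] J unfolding h_def by blast
    have PTI': "PT S' I'" using p's I'p by blast
    have JL: "J \<subseteq> VHr h" using itJ unfolding indep_transversal_def by blast
    have I'notf: "\<And>x v. x \<in> I' \<Longrightarrow> v \<in> V \<Longrightarrow> x \<notin> L (v,f)" using PT_notin[OF PTI' S' _ _ f(1) f(2)] by blast
    have Jnot: "\<And>x v s. x \<in> J \<Longrightarrow> v \<in> V \<Longrightarrow> s \<in> S' \<Longrightarrow> x \<notin> L (v,s)"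
    proof
      fix x v s assume x: "x \<in> J" and v: "v \<in> V" and s: "s \<in> S'" and xL: "x \<in> L (v,s)"
      obtain u where u: "u \<in> V" "x \<in> L (u,f)" using x JL unfolding VHr_def Lr_def by auto
      have "(u,f) \<noteq> (v,s)" using s f by auto
      thus False using disj[of "(u,f)" "(v,s)"] u v s S' f xL by auto
    qed
    show "PT (insert f S') I" unfolding PT_def
    proof (intro conjI ballI)
      have "I' \<subseteq> (\<Union>w\<in>V \<times> insert f S'. L w)" using PTI' unfolding PT_def by blast
      moreover have "J \<subseteq> (\<Union>w\<in>V \<times> insert f S'. L w)" using JL unfolding VHr_def Lr_def by blast
      ultimately show "I \<subseteq> (\<Union>w\<in>V \<times> insert f S'. L w)"
        unfolding I I'_def[symmetric] by blast
    next
      fix x y assume x: "x \<in> I" and y: "y \<in> I"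
      show "\<not> EH x y"
      proof
        assume e: "EH x y"
        consider "x \<in> I'" "y \<in> I'" | "x \<in> J" "y \<in> J" | "x \<in> I'" "y \<in> J" | "x \<in> J" "y \<in> I'"
          using x y unfolding I I'_def by blast
        thus False
        proof cases
          case 1 thus False using PTI' e unfolding PT_def by blast
        next
          case 2 thus False using itJ e JL unfolding indep_transversal_def EHr_def by blast
        next
          case 3
          then obtain v where v: "v \<in> V" "y \<in> Lr h v" using JL unfolding VHr_def by auto
          thus False using block[of v y x] 3 e unfolding Lr_def by auto
        next
          case 4
          then obtain v where v: "v \<in> V" "x \<in> Lr h v" using JL unfolding VHr_def by auto
          thus False using block[of v x y] 4 sym[OF e] unfolding Lr_def by auto
        qed
      qed
    next
      fix w assume w: "w \<in> V \<times> insert f S'"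
      then obtain v s where ws: "w = (v,s)" "v \<in> V" "s \<in> insert f S'" by auto
      show "card (I \<inter> L w) = 1"
      proof (cases "s = f")
        case True
        have "I \<inter> L w = J \<inter> Lr h v"
        proof
          show "I \<inter> L w \<subseteq> J \<inter> Lr h v"
          proof
            fix x assume x: "x \<in> I \<inter> L w"
            hence xJ: "x \<in> J" using I'notf ws True unfolding I I'_def by auto
            then obtain u where u: "u \<in> V" "x \<in> Lr h u" using JL unfolding VHr_def by auto
            have "u = v" using disj[of "(u,f)" "(v,f)"] u x ws True f unfolding Lr_def by auto
            thus "x \<in> J \<inter> Lr h v" using u xJ by auto
          qed
          show "J \<inter> Lr h v \<subseteq> I \<inter> L w" unfolding I Lr_def ws True by auto
        qed
        thus ?thesis using itJ ws unfolding indep_transversal_def by auto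
      next
        case False
        hence s: "s \<in> S'" using ws by auto
        have "I \<inter> L w = I' \<inter> L w" using Jnot[OF _ ws(2) s] ws unfolding I I'_def by auto
        thus ?thesis using PTI' ws s unfolding PT_def by auto
      qed
    qed
  next
    show "MP (insert f S') p" unfolding MP_def
    proof (intro ballI)
      fix w x assume w: "w \<in> V \<times> insert f S'" and x: "x \<in> L w"
      then obtain v s where ws: "w = (v,s)" "v \<in> V" "s \<in> insert f S'" by auto
      have pr: "measure_pmf.prob p {I. x \<in> I} = (\<integral>z. measure_pmf.prob (Q (snd z)) {J. x \<in> fst z \<union> J} \<partial>measure_pmf D)"
        unfolding p_def measure_bind_pmf_real by simp
      show "measure_pmf.prob p {I. x \<in> I} = 1 / real (Suc k)"
      proof (cases "s = f")
        case True
        have "measure_pmf.prob p {I. x \<in> I} = (\<integral>z. (1 / real k) * indicator {z. \<not> snd z v = x} z \<partial>measure_pmf D)"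
          unfolding pr
        proof (rule int_cong_pmf)
          fix z assume z: "z \<in> set_pmf D"
          have I'p: "fst z \<in> set_pmf p'" and hR: "snd z \<in> set_pmf (R (fst z))" using Dsupp[OF z] by auto
          have good: "\<And>v. v \<in> V \<Longrightarrow> snd z v \<in> L (v,f)" using Rs[OF I'p hR] by blast
          have "x \<notin> fst z" using PT_notin[OF p's[OF I'p] S' _ ws(2) f] x ws True by blast
          hence "measure_pmf.prob (Q (snd z)) {J. x \<in> fst z \<union> J} = measure_pmf.prob (Q (snd z)) {J. x \<in> J}" by simp
          also have "\<dots> = (1 / real k) * indicator {z. \<not> snd z v = x} z"
          proof (cases "snd z v = x")
            case True
            have "measure_pmf.prob (Q (snd z)) {J. x \<in> J} = measure_pmf.prob (Q (snd z)) {}"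
            proof (rule prob_cong_supp)
              fix J assume J: "J \<in> set_pmf (Q (snd z))"
              have itJ: "indep_transversal V (Lr (snd z)) (VHr (snd z)) (EHr (snd z)) J" using Qp[OF good] J by blast
              have "x \<notin> J"
              proof
                assume "x \<in> J"
                then obtain u where u: "u \<in> V" "x \<in> Lr (snd z) u" using itJ unfolding indep_transversal_def VHr_def by auto
                have "u = v" using disj[of "(u,f)" "(v,f)"] u x ws \<open>s = f\<close> f unfolding Lr_def by auto
                thus False using u True unfolding Lr_def by auto
              qed
              thus "J \<in> {J. x \<in> J} \<longleftrightarrow> J \<in> {}" by auto
            qed
            thus ?thesis using True by simp
          next
            case False
            have xr: "x \<in> Lr (snd z) v" using x ws \<open>s = f\<close> False unfolding Lr_def by auto
            have "card (Lr (snd z) v) = k" using covr[OF good] ws unfolding k_fold_cover_def by auto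
            thus ?thesis using Qp[OF good] ws xr False by auto
          qed
          finally show "measure_pmf.prob (Q (snd z)) {J. x \<in> fst z \<union> J} = (1 / real k) * indicator {z. \<not> snd z v = x} z" .
        qed
        also have "\<dots> = (1 / real k) * measure_pmf.prob D {z. \<not> snd z v = x}"
          by (simp add: int_ind_pmf)
        also have "\<dots> = (1 / real k) * (1 - 1 / real (Suc k))"
          using Rm[OF ws(2), of x] x ws True unfolding D_def by (simp add: prob_not_pmf)
        also have "\<dots> = 1 / real (Suc k)" using k1 by (simp add: field_simps)
        finally show ?thesis .
      next
        case False
        hence s: "s \<in> S'" using ws by auto
        have "measure_pmf.prob p {I. x \<in> I} = (\<integral>z. indicator {z. x \<in> fst z} z \<partial>measure_pmf D)"
          unfolding pr
        proof (rule int_cong_pmf)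
          fix z assume z: "z \<in> set_pmf D"
          have "measure_pmf.prob (Q (snd z)) {J. x \<in> fst z \<union> J} = measure_pmf.prob (Q (snd z)) (if x \<in> fst z then UNIV else {})"
          proof (rule prob_cong_supp)
            fix J assume J: "J \<in> set_pmf (Q (snd z))"
            have "J \<subseteq> (\<Union>v\<in>V. L (v,f))" using Jsub[OF z J] .
            moreover have "\<And>u. u \<in> V \<Longrightarrow> x \<notin> L (u,f)"
            proof
              fix u assume u: "u \<in> V" "x \<in> L (u,f)"
              have "(u,f) \<noteq> (v,s)" using s f by auto
              thus False using disj[of "(u,f)" "(v,s)"] u ws s S' f x by auto
            qed
            ultimately have "x \<notin> J" by auto
            thus "J \<in> {J. x \<in> fst z \<union> J} \<longleftrightarrow> J \<in> (if x \<in> fst z then UNIV else {})" by auto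
          qed
          thus "measure_pmf.prob (Q (snd z)) {J. x \<in> fst z \<union> J} = indicator {z. x \<in> fst z} z" by auto
        qed
        also have "\<dots> = measure_pmf.prob D {z. x \<in> fst z}" by (rule int_ind_pmf)
        also have "\<dots> = (\<integral>I'. measure_pmf.prob (map_pmf (\<lambda>h. (I',h)) (R I')) {z. x \<in> fst z} \<partial>measure_pmf p')"
          unfolding D_def by (rule measure_bind_pmf_real)
        also have "\<dots> = (\<integral>I'. indicator {I. x \<in> I} I' \<partial>measure_pmf p')"
          by (rule int_cong_pmf) (auto simp: vimage_def)
        also have "\<dots> = measure_pmf.prob p' {I. x \<in> I}" by (rule int_ind_pmf)
        also have "\<dots> = 1 / real (Suc k)" using p'm ws s x unfolding MP_def by auto
        finally show ?thesis .
      qed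
    qed
  qed
qed

lemma main_ind: "S \<subseteq> VF \<Longrightarrow> \<exists>p. (\<forall>I\<in>set_pmf p. PT S I) \<and> MP S p"
proof (induction "card S" arbitrary: S rule: less_induct)
  case less
  show ?case
  proof (cases "S = {}")
    case True
    show ?thesis
      by (rule exI[of _ "return_pmf {}"]) (simp add: True PT_def MP_def)
  next
    case False
    have finS: "finite S" using less.prems finVF by (rule finite_subset)
    obtain f where fS: "f \<in> S" and leaf: "\<And>g1 g2. g1 \<in> S \<Longrightarrow> g2 \<in> S \<Longrightarrow> EF f g1 \<Longrightarrow> EF f g2 \<Longrightarrow> g1 = g2"
      using leaf_exists[OF gF acyc less.prems False] by blast
    define S' where "S' = S - {f}"
    have cS': "card S' < card S" unfolding S'_def using finS fS by (meson card_Diff1_less)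
    have S'V: "S' \<subseteq> VF" using less.prems unfolding S'_def by auto
    obtain p' where p's: "\<And>I. I \<in> set_pmf p' \<Longrightarrow> PT S' I" and p'm: "MP S' p'"
      using less.hyps[OF cS' S'V] by blast
    have fV: "f \<in> VF" "f \<notin> S'" using fS less.prems unfolding S'_def by auto
    have Seq: "S = insert f S'" using fS unfolding S'_def by auto
    show ?thesis
    proof (cases "\<exists>g\<in>S'. EF f g")
      case True
      then obtain g where g: "g \<in> S'" "EF f g" by blast
      have guniq: "\<And>g'. g' \<in> S' \<Longrightarrow> EF f g' \<Longrightarrow> g' = g" using leaf g unfolding S'_def by blast
      have gV: "g \<in> VF" using g S'V by auto
      have EWgf: "\<And>v. EW (v,g) (v,f)" using g symF unfolding cart_prod_edges_def by auto
      have "\<forall>v\<in>V. \<exists>\<sigma>. bij_betw \<sigma> (L (v,g)) (L (v,f)) \<and> (\<forall>y\<in>L (v,g). \<forall>x\<in>L (v,f). EH y x \<longrightarrow> x = \<sigma> y)"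
      proof
        fix v assume v: "v \<in> V"
        show "\<exists>\<sigma>. bij_betw \<sigma> (L (v,g)) (L (v,f)) \<and> (\<forall>y\<in>L (v,g). \<forall>x\<in>L (v,f). EH y x \<longrightarrow> x = \<sigma> y)"
        proof (rule ext_bij)
          show "finite (L (v,g))" "finite (L (v,f))" using finL v gV fV by auto
          show "card (L (v,g)) = card (L (v,f))" using cardL v gV fV by auto
          show "\<And>y x1 x2. y \<in> L (v,g) \<Longrightarrow> x1 \<in> L (v,f) \<Longrightarrow> x2 \<in> L (v,f) \<Longrightarrow> EH y x1 \<Longrightarrow> EH y x2 \<Longrightarrow> x1 = x2"
            using match1[of "(v,g)" "(v,f)"] v gV fV EWgf by blast
          show "\<And>x y1 y2. x \<in> L (v,f) \<Longrightarrow> y1 \<in> L (v,g) \<Longrightarrow> y2 \<in> L (v,g) \<Longrightarrow> EH y1 x \<Longrightarrow> EH y2 x \<Longrightarrow> y1 = y2"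
            using match2[of "(v,g)" "(v,f)"] v gV fV EWgf by blast
        qed
      qed
      then obtain \<sigma> where \<sigma>: "\<And>v. v \<in> V \<Longrightarrow> bij_betw (\<sigma> v) (L (v,g)) (L (v,f))"
        and \<sigma>M: "\<And>v y x. v \<in> V \<Longrightarrow> y \<in> L (v,g) \<Longrightarrow> x \<in> L (v,f) \<Longrightarrow> EH y x \<Longrightarrow> x = \<sigma> v y"
        by metis
      define hf where "hf = (\<lambda>I' v. \<sigma> v (THE y. y \<in> I' \<inter> L (v,g)))"
      have single: "\<exists>y0. I' \<inter> L (v,g) = {y0} \<and> hf I' v = \<sigma> v y0" if "I' \<in> set_pmf p'" "v \<in> V" for I' v
      proof -
        have "card (I' \<inter> L (v,g)) = 1" using p's[OF that(1)] that(2) g unfolding PT_def by auto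
        then obtain y0 where y0: "I' \<inter> L (v,g) = {y0}" by (rule card_1_singletonE)
        hence "(THE y. y \<in> I' \<inter> L (v,g)) = y0" by auto
        thus ?thesis using y0 unfolding hf_def by auto
      qed
      have "\<exists>p. (\<forall>I\<in>set_pmf p. PT (insert f S') I) \<and> MP (insert f S') p"
      proof (rule step[OF S'V fV p's p'm, where R = "\<lambda>I'. return_pmf (hf I')"])
        fix I' h v assume I': "I' \<in> set_pmf p'" and h: "h \<in> set_pmf (return_pmf (hf I'))" and v: "v \<in> V"
        have hh: "h = hf I'" using h by simp
        obtain y0 where y0: "I' \<inter> L (v,g) = {y0}" "hf I' v = \<sigma> v y0" using single[OF I' v] by blast
        have "h v \<in> L (v,f)" using hh y0 \<sigma>[OF v] unfolding bij_betw_def by auto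
        moreover have "\<forall>x\<in>L (v,f). \<forall>y\<in>I'. EH y x \<longrightarrow> x = h v"
        proof (intro ballI impI)
          fix x y assume x: "x \<in> L (v,f)" and y: "y \<in> I'" and e: "EH y x"
          obtain w where w: "w \<in> V \<times> S'" "y \<in> L w" using p's[OF I'] y unfolding PT_def by auto
          obtain u s where ws: "w = (u,s)" "u \<in> V" "s \<in> S'" using w by auto
          have ne: "(u,s) \<noteq> (v,f)" using ws fV by auto
          have sV: "s \<in> VF" using ws S'V by auto
          have "EW (u,s) (v,f)"
          proof (rule ccontr)
            assume "\<not> EW (u,s) (v,f)"
            thus False using nonadj[of "(u,s)" "(v,f)" y x] ws sV v fV(1) ne w x e by auto
          qed
          hence "u = v" "EF s f" using ws fV unfolding cart_prod_edges_def by auto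
          hence "s = g" using guniq ws symF by auto
          hence "y = y0" using y0 y w ws \<open>u = v\<close> by auto
          thus "x = h v" using \<sigma>M[OF v _ x e] y0 hh \<open>y = y0\<close> by auto
        qed
        ultimately show "h v \<in> L (v,f) \<and> (\<forall>x\<in>L (v,f). \<forall>y\<in>I'. EH y x \<longrightarrow> x = h v)" by blast
      next
        fix v x assume v: "v \<in> V" and x: "x \<in> L (v,f)"
        obtain y1 where y1: "y1 \<in> L (v,g)" "\<sigma> v y1 = x" using \<sigma>[OF v] x unfolding bij_betw_def by (metis imageE)
        have "measure_pmf.prob (p' \<bind> (\<lambda>I'. map_pmf (\<lambda>h. (I', h)) (return_pmf (hf I')))) {z. snd z v = x}
            = (\<integral>I'. measure_pmf.prob (map_pmf (\<lambda>h. (I', h)) (return_pmf (hf I'))) {z. snd z v = x} \<partial>measure_pmf p')"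
          by (rule measure_bind_pmf_real)
        also have "\<dots> = (\<integral>I'. indicator {I. y1 \<in> I} I' \<partial>measure_pmf p')"
        proof (rule int_cong_pmf)
          fix I' assume I': "I' \<in> set_pmf p'"
          obtain y0 where y0: "I' \<inter> L (v,g) = {y0}" "hf I' v = \<sigma> v y0" using single[OF I' v] by blast
          have y0L: "y0 \<in> L (v,g)" using y0 by auto
          have "hf I' v = x \<longleftrightarrow> y1 \<in> I'"
          proof
            assume "hf I' v = x"
            hence "\<sigma> v y0 = \<sigma> v y1" using y0 y1 by simp
            hence "y0 = y1" using \<sigma>[OF v] y0L y1 unfolding bij_betw_def inj_on_def by blast
            thus "y1 \<in> I'" using y0 by auto
          next
            assume "y1 \<in> I'"
            hence "y1 = y0" using y0 y1 by auto
            thus "hf I' v = x" using y0 y1 by simp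
          qed
          thus "measure_pmf.prob (map_pmf (\<lambda>h. (I', h)) (return_pmf (hf I'))) {z. snd z v = x} = indicator {I. y1 \<in> I} I'"
            by (auto simp: vimage_def indicator_def)
        qed
        also have "\<dots> = measure_pmf.prob p' {I. y1 \<in> I}" by (rule int_ind_pmf)
        also have "\<dots> = 1 / real (Suc k)" using p'm v g y1 unfolding MP_def by auto
        finally show "measure_pmf.prob (p' \<bind> (\<lambda>I'. map_pmf (\<lambda>h. (I', h)) (return_pmf (hf I')))) {z. snd z v = x} = 1 / real (Suc k)" .
      qed
      thus ?thesis using Seq by simp
    next
      case False
      have "\<forall>v\<in>V. \<exists>\<psi>. bij_betw \<psi> {0..<Suc k} (L (v,f))"
        using finL cardL fV ex_bij_betw_nat_finite by (metis SigmaI)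
      then obtain \<psi> where \<psi>: "\<And>v. v \<in> V \<Longrightarrow> bij_betw (\<psi> v) {0..<Suc k} (L (v,f))" by metis
      define R0 where "R0 = map_pmf (\<lambda>i v. \<psi> v i) (pmf_of_set {0..<Suc k})"
      have "\<exists>p. (\<forall>I\<in>set_pmf p. PT (insert f S') I) \<and> MP (insert f S') p"
      proof (rule step[OF S'V fV p's p'm, where R = "\<lambda>I'. R0"])
        fix I' h v assume I': "I' \<in> set_pmf p'" and h: "h \<in> set_pmf R0" and v: "v \<in> V"
        obtain i where i: "i < Suc k" "h = (\<lambda>v. \<psi> v i)" using h unfolding R0_def by auto
        have "h v \<in> L (v,f)" using i \<psi>[OF v] unfolding bij_betw_def by auto
        moreover have "\<forall>x\<in>L (v,f). \<forall>y\<in>I'. EH y x \<longrightarrow> x = h v"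
        proof (intro ballI impI)
          fix x y assume x: "x \<in> L (v,f)" and y: "y \<in> I'" and e: "EH y x"
          obtain w where w: "w \<in> V \<times> S'" "y \<in> L w" using p's[OF I'] y unfolding PT_def by auto
          obtain u s where ws: "w = (u,s)" "u \<in> V" "s \<in> S'" using w by auto
          have ne: "(u,s) \<noteq> (v,f)" using ws fV by auto
          have sV: "s \<in> VF" using ws S'V by auto
          have "EW (u,s) (v,f)"
          proof (rule ccontr)
            assume "\<not> EW (u,s) (v,f)"
            thus False using nonadj[of "(u,s)" "(v,f)" y x] ws sV v fV(1) ne w x e by auto
          qed
          hence "EF s f" using ws fV unfolding cart_prod_edges_def by auto
          thus "x = h v" using False ws symF by blast
        qed
        ultimately show "h v \<in> L (v,f) \<and> (\<forall>x\<in>L (v,f). \<forall>y\<in>I'. EH y x \<longrightarrow> x = h v)" by blast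
      next
        fix v x assume v: "v \<in> V" and x: "x \<in> L (v,f)"
        obtain i1 where i1: "i1 < Suc k" "\<psi> v i1 = x" using \<psi>[OF v] x unfolding bij_betw_def by (metis imageE atLeastLessThan_iff)
        have iset: "{0..<Suc k} \<inter> {i. \<psi> v i = x} = {i1}"
          using i1 \<psi>[OF v] unfolding bij_betw_def inj_on_def by auto
        have "measure_pmf.prob (p' \<bind> (\<lambda>I'. map_pmf (\<lambda>h. (I', h)) R0)) {z. snd z v = x}
            = (\<integral>I'. measure_pmf.prob (map_pmf (\<lambda>h. (I', h)) R0) {z. snd z v = x} \<partial>measure_pmf p')"
          by (rule measure_bind_pmf_real)
        also have "\<dots> = (\<integral>I'. 1 / real (Suc k) \<partial>measure_pmf p')"
        proof (rule int_cong_pmf)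
          fix I'
          have "measure_pmf.prob (map_pmf (\<lambda>h. (I', h)) R0) {z. snd z v = x}
              = measure_pmf.prob (pmf_of_set {0..<Suc k}) {i. \<psi> v i = x}"
            unfolding R0_def by (simp add: vimage_def)
          also have "\<dots> = 1 / real (Suc k)" by (subst measure_pmf_of_set) (auto simp: iset)
          finally show "measure_pmf.prob (map_pmf (\<lambda>h. (I', h)) R0) {z. snd z v = x} = 1 / real (Suc k)" .
        qed
        also have "\<dots> = 1 / real (Suc k)" by simp
        finally show "measure_pmf.prob (p' \<bind> (\<lambda>I'. map_pmf (\<lambda>h. (I', h)) R0)) {z. snd z v = x} = 1 / real (Suc k)" .
      qed
      thus ?thesis using Seq by simp
    qed
  qed
qed

lemma packing: "has_fractional_packing W L VH EH"
proof -
  obtain p where ps: "\<And>I. I \<in> set_pmf p \<Longrightarrow> PT VF I" and pm: "MP VF p" using main_ind by blast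
  show ?thesis unfolding has_fractional_packing_def
  proof (intro exI[of _ p] conjI ballI subsetI)
    fix I assume "I \<in> set_pmf p"
    thus "I \<in> {I. indep_transversal W L VH EH I}"
      using ps VHeq unfolding PT_def indep_transversal_def by auto
  next
    fix w x assume "w \<in> W" "x \<in> L w"
    thus "measure_pmf.prob p {I. x \<in> I} = 1 / real (card (L w))"
      using pm cardL unfolding MP_def by auto
  qed
qed

end
theorem mainTheorem12:
  fixes V :: "'a set" and E :: "'a \<Rightarrow> 'a \<Rightarrow> bool"
    and VF :: "'c set" and EF :: "'c \<Rightarrow> 'c \<Rightarrow> bool"
  assumes "graph V E" and "tree VF EF"
  shows "chi_c_bullet (V \<times> VF) (cart_prod_edges E EF) \<le> chi_c_bullet V E + 1"
proof -
  have gG: "graph V E" using assms(1) .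
  have gF: "graph VF EF" and neF: "VF \<noteq> {}" and acyc: "\<nexists>cs. is_cycle VF EF cs"
    using assms(2) unfolding tree_def by auto
  have finV: "finite V" using gG unfolding graph_def by auto
  define PG where "PG = (\<lambda>k. k \<ge> 1 \<and> (\<forall>(L :: 'a \<Rightarrow> ('a \<times> nat) set) VH EH.
      k_fold_cover k V E L VH EH \<longrightarrow> has_fractional_packing V L VH EH))"
  define PW where "PW = (\<lambda>k. k \<ge> 1 \<and> (\<forall>(L :: ('a \<times> 'c) \<Rightarrow> (('a \<times> 'c) \<times> nat) set) VH EH.
      k_fold_cover k (V \<times> VF) (cart_prod_edges E EF) L VH EH \<longrightarrow> has_fractional_packing (V \<times> VF) L VH EH))"
  have cG: "chi_c_bullet V E = Least PG" unfolding chi_c_bullet_def PG_def ..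
  have cW: "chi_c_bullet (V \<times> VF) (cart_prod_edges E EF) = Least PW" unfolding chi_c_bullet_def PW_def ..
  show ?thesis
  proof (cases "\<exists>k. PG k")
    case True
    define k0 where "k0 = Least PG"
    have PGk: "PG k0" unfolding k0_def using True by (rule LeastI_ex)
    have k1: "k0 \<ge> 1" using PGk unfolding PG_def by auto
    have "PW (Suc k0)" unfolding PW_def
    proof (intro conjI allI impI)
      show "1 \<le> Suc k0" by simp
      fix L :: "('a \<times> 'c) \<Rightarrow> (('a \<times> 'c) \<times> nat) set" and VH EH
      assume cov: "k_fold_cover (Suc k0) (V \<times> VF) (cart_prod_edges E EF) L VH EH"
      have QG: "\<forall>(L' :: 'a \<Rightarrow> (('a \<times> 'c) \<times> nat) set) VH' EH'. k_fold_cover k0 V E L' VH' EH' \<longrightarrow> has_fractional_packing V L' VH' EH'"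
        using transfer_packing[OF _ k1 finV] PGk unfolding PG_def by blast
      interpret pk V E VF EF L VH EH k0
        by unfold_locales (fact gG gF acyc cov k1 QG)+
      show "has_fractional_packing (V \<times> VF) L VH EH" by (rule packing)
    qed
    hence "Least PW \<le> Suc k0" by (rule Least_le)
    thus ?thesis using cG cW k0_def by simp
  next
    case False
    obtain f0 where f0: "f0 \<in> VF" using neF by blast
    have noW: "\<not> PW k" for k
    proof
      assume "PW k"
      hence "PG k" using restrict_packing[OF _ f0 gF gG] unfolding PW_def PG_def by blast
      thus False using False by blast
    qed
    have "PG = (\<lambda>_. False)" "PW = (\<lambda>_. False)" using False noW by auto
    thus ?thesis using cG cW by simp
  qed
qed

end
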